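(* For every $M \geq 1$ there exist $H \geq 1$ and $\epsilon > 0$ such that the following holds. Let $f \colon (\mathbb{W},d_{\mathrm{par}}) \to (\mathbb{H},d)$ be an $M$-bilipschitz map, let $\theta \in [-\pi/2,\pi/2)$, and let $Q \in \mathcal{D}$ be such that $\beta_{f}(\mathbb{V};HQ) < \epsilon/H$ for some vertical subgroup $\mathbb{V}$ with $\angle(\mathbb{V},\mathbb{W}_{\theta}) = 0$. Then $\mathcal{H}^{3}(\Pi_{\theta}[f(HQ)]) \geq \ell(Q)^{3}$.
   Context: $\mathbb{H}$ is $\mathbb{R}^{3}$ with group law $(x_{1},y_{1},t_{1}) \cdot (x_{2},y_{2},t_{2}) = (x_{1}+x_{2},y_{1}+y_{2},t_{1}+t_{2}+\tfrac{1}{2}(x_{1}y_{2}-x_{2}y_{1}))$, metric $d(p,q) = \|q^{-1}\cdot p\|$ with $\|(x,y,t)\| = \max\{\sqrt{x^{2}+y^{2}},\sqrt{|t|}\}$, $N(E,\delta) = \{p : \operatorname{dist}(p,E) \leq \delta\}$, and $\mathcal{H}^{3}$ the $3$-dimensional Hausdorff measure w.r.t. $d$. Horizontal lines in $\mathbb{H}$: sets $p \cdot \{(sa,sb,0) : s \in \mathbb{R}\}$, $(a,b) \neq 0$. Vertical planes: sets $\{(x,y,t) : (x,y) \in \lambda\}$, $\lambda \subset \mathbb{R}^{2}$ an affine line; vertical subgroups are those containing $0$. $R_{\theta}(z,t) = (e^{i\theta}z,t)$ with $z = x+iy$; $\mathbb{W}_{\theta} = R_{\theta}(\{(0,y,t)\})$;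 $\Pi(x,y,t) = (0,y,t+\tfrac{1}{2}xy)$ and $\Pi_{\theta} = R_{\theta} \circ \Pi \circ R_{\theta}^{-1}$. A horizontal line not contained in a left translate of the $xt$-plane can be written uniquely as $\{(ay+b,y,\tfrac{1}{2}by+c) : y \in \mathbb{R}\}$; its slope is $|a|$ (and $\infty$ for lines in translates of the $xt$-plane); the slope $\angle(\mathbb{V})$ of a vertical plane is the slope of any horizontal line it contains, and $\angle(\mathbb{V},\mathbb{W}_{\theta}) := \angle(R_{\theta}^{-1}\mathbb{V})$. $\mathbb{W}$ is $\mathbb{R}^{2}$ with $d_{\mathrm{par}}((y,t),(\xi,\tau)) = \max\{|y-\xi|,|t-\tau|^{1/2}\}$; horizontal lines in $\mathbb{W}$ are $\mathbb{R} \times \{t\}$. $\mathcal{D}$: dyadic parabolic rectangles $Q = [k2^{-n},(k+1)2^{-n}) \times [l4^{-n},(l+1)4^{-n})$, $\ell(Q) = 2^{-n}$, centre $c_{Q}$, $HQ$ the closed $d_{\mathrm{par}}$-ball of radius $H\ell(Q)$ around $c_{Q}$. For a vertical plane $\mathbb{V}$ and a closed parabolic ball $B(w,r)$, $\beta_{f}(\mathbb{V};B(w,r))$ is the infimum of $\epsilon > 0$ such that for every horizontal line $\ell \subset \mathbb{W}$ there is a horizontal line $L \subset \mathbb{V}$ with $f(\ell \cap B(w,r)) \subset N(L,\epsilon r)$. *)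

theory Defs
  imports "HOL-Analysis.Analysis"
begin

type_synonym heis = "real \<times> real \<times> real"

definition hmult :: "heis \<Rightarrow> heis \<Rightarrow> heis" where
  "hmult p q = (case p of (x1, y1, t1) \<Rightarrow> case q of (x2, y2, t2) \<Rightarrow>
      (x1 + x2, y1 + y2, t1 + t2 + (x1 * y2 - x2 * y1) / 2))"

definition hinv :: "heis \<Rightarrow> heis" where
  "hinv p = (case p of (x, y, t) \<Rightarrow> (-x, -y, -t))"

definition hnorm :: "heis \<Rightarrow> real" where
  "hnorm p = (case p of (x, y, t) \<Rightarrow> max (sqrt (x\<^sup>2 + y\<^sup>2)) (sqrt \<bar>t\<bar>))"

definition hdist :: "heis \<Rightarrow> heis \<Rightarrow> real" where
  "hdist p q = hnorm (hmult (hinv q) p)"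

definition hsetdist :: "heis \<Rightarrow> heis set \<Rightarrow> real" where
  "hsetdist p E = Inf {hdist p q | q. q \<in> E}"

definition hnbhd :: "heis set \<Rightarrow> real \<Rightarrow> heis set" where
  "hnbhd E \<delta> = {p. hsetdist p E \<le> \<delta>}"

definition mdiam :: "('a \<Rightarrow> 'a \<Rightarrow> real) \<Rightarrow> 'a set \<Rightarrow> real" where
  "mdiam d E = (if E = {} then 0 else Sup {d x y | x y. x \<in> E \<and> y \<in> E})"

definition hausdorff_content :: "('a \<Rightarrow> 'a \<Rightarrow> real) \<Rightarrow> real \<Rightarrow> real \<Rightarrow> 'a set \<Rightarrow> ennreal" where
  "hausdorff_content d s \<delta> A =
     (INF C \<in> {C :: nat \<Rightarrow> 'a set. A \<subseteq> (\<Union>i. C i) \<and>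
                 (\<forall>i. bdd_above {d x y | x y. x \<in> C i \<and> y \<in> C i} \<and> mdiam d (C i) \<le> \<delta>)}.
        (\<Sum>i. ennreal (mdiam d (C i) powr s)))"

definition hausdorff_measure :: "('a \<Rightarrow> 'a \<Rightarrow> real) \<Rightarrow> real \<Rightarrow> 'a set \<Rightarrow> ennreal" where
  "hausdorff_measure d s A = (SUP \<delta> \<in> {0<..}. hausdorff_content d s \<delta> A)"

definition horizontal_line :: "heis set \<Rightarrow> bool" where
  "horizontal_line L \<longleftrightarrow> (\<exists>p a b. (a, b) \<noteq> (0, 0) \<and> L = {hmult p (s * a, s * b, 0) | s. True})"

definition vertical_plane :: "heis set \<Rightarrow> bool" where
  "vertical_plane V \<longleftrightarrow> (\<exists>x0 y0 a b. (a, b) \<noteq> (0, 0) \<and>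
      V = {(x, y, t). \<exists>s. x = x0 + s * a \<and> y = y0 + s * b})"

definition vertical_subgroup :: "heis set \<Rightarrow> bool" where
  "vertical_subgroup V \<longleftrightarrow> vertical_plane V \<and> (0, 0, 0) \<in> V"

definition line_slope :: "heis set \<Rightarrow> ereal" where
  "line_slope L = (if \<exists>a b c. L = {(a * y + b, y, b * y / 2 + c) | y. True}
      then ereal \<bar>THE a. \<exists>b c. L = {(a * y + b, y, b * y / 2 + c) | y. True}\<bar>
      else \<infinity>)"

definition plane_slope :: "heis set \<Rightarrow> ereal" where
  "plane_slope V = line_slope (SOME L. horizontal_line L \<and> L \<subseteq> V)"

definition rot :: "real \<Rightarrow> heis \<Rightarrow> heis" where
  "rot \<theta> p = (case p of (x, y, t) \<Rightarrow> (x * cos \<theta> - y * sin \<theta>, x * sin \<theta> + y * cos \<theta>, t))"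

definition plane_angle :: "heis set \<Rightarrow> real \<Rightarrow> ereal" where
  "plane_angle V \<theta> = plane_slope (rot (-\<theta>) ` V)"

definition Wtheta :: "real \<Rightarrow> heis set" where
  "Wtheta \<theta> = rot \<theta> ` {(0, y, t) | y t. True}"

definition proj :: "heis \<Rightarrow> heis" where
  "proj p = (case p of (x, y, t) \<Rightarrow> (0, y, t + x * y / 2))"

definition proj_theta :: "real \<Rightarrow> heis \<Rightarrow> heis" where
  "proj_theta \<theta> = rot \<theta> \<circ> proj \<circ> rot (-\<theta>)"

definition dpar :: "real \<times> real \<Rightarrow> real \<times> real \<Rightarrow> real" where
  "dpar w v = (case w of (y, t) \<Rightarrow> case v of (\<xi>, \<tau>) \<Rightarrow> max \<bar>y - \<xi>\<bar> (sqrt \<bar>t - \<tau>\<bar>))"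

definition pball :: "real \<times> real \<Rightarrow> real \<Rightarrow> (real \<times> real) set" where
  "pball w r = {v. dpar w v \<le> r}"

definition bilipschitz :: "real \<Rightarrow> (real \<times> real \<Rightarrow> heis) \<Rightarrow> bool" where
  "bilipschitz M f \<longleftrightarrow> (\<forall>w v. dpar w v / M \<le> hdist (f w) (f v) \<and> hdist (f w) (f v) \<le> M * dpar w v)"

definition dyadic_rect :: "int \<Rightarrow> int \<Rightarrow> int \<Rightarrow> (real \<times> real) set" where
  "dyadic_rect n k l = {k * 2 powr (-n) ..< (k + 1) * 2 powr (-n)} \<times> {l * 4 powr (-n) ..< (l + 1) * 4 powr (-n)}"

definition side :: "int \<Rightarrow> real" where
  "side n = 2 powr (- real_of_int n)"

definition centre :: "int \<Rightarrow> int \<Rightarrow> int \<Rightarrow> real \<times> real" where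
  "centre n k l = ((k + 1/2) * 2 powr (-n), (l + 1/2) * 4 powr (-n))"

text \<open>HQ: closed d_par ball of radius H l(Q) around c_Q.\<close>
definition enlarged :: "real \<Rightarrow> int \<Rightarrow> int \<Rightarrow> int \<Rightarrow> (real \<times> real) set" where
  "enlarged H n k l = pball (centre n k l) (H * side n)"

definition horizontal_line_W :: "(real \<times> real) set \<Rightarrow> bool" where
  "horizontal_line_W hl \<longleftrightarrow> (\<exists>t. hl = UNIV \<times> {t})"

definition beta :: "(real \<times> real \<Rightarrow> heis) \<Rightarrow> heis set \<Rightarrow> real \<times> real \<Rightarrow> real \<Rightarrow> real" where
  "beta f V w r = Inf {\<epsilon>. \<epsilon> > 0 \<and> (\<forall>hl. horizontal_line_W hl \<longrightarrow>
        (\<exists>L. horizontal_line L \<and> L \<subseteq> V \<and> f ` (hl \<inter> pball w r) \<subseteq> hnbhd L (\<epsilon> * r)))}"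

end

theory Submission
  imports Defs
begin

lemma hmult_simp: "hmult (x1,y1,t1) (x2,y2,t2) = (x1 + x2, y1 + y2, t1 + t2 + (x1 * y2 - x2 * y1) / 2)"
  by (simp add: hmult_def)
lemma hinv_simp: "hinv (x,y,t) = (-x,-y,-t)" by (simp add: hinv_def)
lemma hnorm_simp: "hnorm (x,y,t) = max (sqrt (x\<^sup>2 + y\<^sup>2)) (sqrt \<bar>t\<bar>)" by (simp add: hnorm_def)
lemma rot_simp: "rot a (x,y,t) = (x * cos a - y * sin a, x * sin a + y * cos a, t)" by (simp add: rot_def)

lemma hdist_simp: "hdist (x1,y1,t1) (x2,y2,t2) = max (sqrt ((x1-x2)\<^sup>2 + (y1-y2)\<^sup>2)) (sqrt \<bar>t1 - t2 + (x1*y2 - x2*y1)/2\<bar>)"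
proof -
  have "hdist (x1,y1,t1) (x2,y2,t2) = hnorm (x1 - x2, y1 - y2, t1 - t2 + (x1*y2 - x2*y1)/2)"
    unfolding hdist_def by (simp add: hmult_simp hinv_simp algebra_simps)
  also have "\<dots> = max (sqrt ((x1-x2)\<^sup>2 + (y1-y2)\<^sup>2)) (sqrt \<bar>t1 - t2 + (x1*y2 - x2*y1)/2\<bar>)"
    by (simp add: hnorm_simp)
  finally show ?thesis .
qed

lemma hdist_nonneg: "0 \<le> hdist p q"
  by (cases p; cases q) (simp add: hdist_simp le_max_iff_disj)

lemma rot_id1: "(x1 * c - y1 * s - (x2 * c - y2 * s))\<^sup>2 + (x1 * s + y1 * c - (x2 * s + y2 * c))\<^sup>2
      = ((x1-x2)\<^sup>2 + (y1-y2)\<^sup>2) * (s\<^sup>2 + c\<^sup>2)" for x1 x2 y1 y2 s c :: real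
  by (simp add: power2_eq_square algebra_simps)
lemma rot_id2: "(x1 * c - y1 * s) * (x2 * s + y2 * c) - (x2 * c - y2 * s) * (x1 * s + y1 * c)
      = (x1*y2 - x2*y1) * (s\<^sup>2 + c\<^sup>2)" for x1 x2 y1 y2 s c :: real
  by (simp add: power2_eq_square algebra_simps)
lemma rot_id3: "(x * c - y * s) * c + (x * s + y * c) * s = x * (s\<^sup>2 + c\<^sup>2)"
  "-((x * c - y * s) * s) + (x * s + y * c) * c = y * (s\<^sup>2 + c\<^sup>2)" for x y s c :: real
  by (simp_all add: power2_eq_square algebra_simps)

lemma hdist_rot: "hdist (rot a p) (rot a q) = hdist p q"
proof -
  obtain x1 y1 t1 x2 y2 t2 where p: "p = (x1,y1,t1)" and q: "q = (x2,y2,t2)" by (cases p; cases q) auto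
  have sc: "(sin a)\<^sup>2 + (cos a)\<^sup>2 = 1" by simp
  show ?thesis unfolding p q rot_simp hdist_simp rot_id1 rot_id2 sc by simp
qed

lemma rot_rot: "rot (-a) (rot a p) = p" "rot a (rot (-a) p) = p"
proof -
  obtain x y t where p: "p = (x,y,t)" by (cases p) auto
  have sc: "(sin a)\<^sup>2 + (cos a)\<^sup>2 = 1" by simp
  have "rot (-a) (rot a p) = ((x * cos a - y * sin a) * cos a + (x * sin a + y * cos a) * sin a,
      -((x * cos a - y * sin a) * sin a) + (x * sin a + y * cos a) * cos a, t)"
    unfolding p rot_simp by simp
  then show "rot (-a) (rot a p) = p" unfolding rot_id3 sc p by simp
  have "rot a (rot (-a) p) = ((x * cos a - (-y) * sin a) * cos a + (x * sin a + (-y) * cos a) * sin a,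
      -(-((x * cos a - (-y) * sin a) * sin a) + (x * sin a + (-y) * cos a) * cos a), t)"
    unfolding p rot_simp by (simp add: algebra_simps)
  then show "rot a (rot (-a) p) = p" unfolding rot_id3 sc p by simp
qed

lemma hdist_sym: "hdist p q = hdist q p"
proof -
  obtain x1 y1 t1 x2 y2 t2 where p: "p = (x1,y1,t1)" and q: "q = (x2,y2,t2)" by (cases p; cases q) auto
  have "(x1-x2)\<^sup>2 + (y1-y2)\<^sup>2 = (x2-x1)\<^sup>2 + (y2-y1)\<^sup>2" by (simp add: power2_eq_square algebra_simps)
  moreover have e: "t2 - t1 + (x2*y1 - x1*y2)/2 = -(t1 - t2 + (x1*y2 - x2*y1)/2)" by (simp add: field_simps)
  then have "\<bar>t1 - t2 + (x1*y2 - x2*y1)/2\<bar> = \<bar>t2 - t1 + (x2*y1 - x1*y2)/2\<bar>" by (simp only: e abs_minus_cancel)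
  ultimately show ?thesis unfolding p q hdist_simp by simp
qed

lemma hnorm_mult: "hnorm (hmult u v) \<le> hnorm u + hnorm v"
proof -
  obtain x1 y1 t1 x2 y2 t2 where u: "u = (x1,y1,t1)" and v: "v = (x2,y2,t2)" by (cases u; cases v) auto
  define a where "a = hnorm u"
  define b where "b = hnorm v"
  have a1: "sqrt (x1\<^sup>2 + y1\<^sup>2) \<le> a" and a2: "sqrt \<bar>t1\<bar> \<le> a" unfolding a_def u hnorm_simp by auto
  have b1: "sqrt (x2\<^sup>2 + y2\<^sup>2) \<le> b" and b2: "sqrt \<bar>t2\<bar> \<le> b" unfolding b_def v hnorm_simp by auto
  have a0: "0 \<le> a" using a2 real_sqrt_ge_zero[of "\<bar>t1\<bar>"] by linarith
  have b0: "0 \<le> b" using b2 real_sqrt_ge_zero[of "\<bar>t2\<bar>"] by linarith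
  have ta: "\<bar>t1\<bar> \<le> a\<^sup>2" using a2 by (rule sqrt_le_D)
  have tb: "\<bar>t2\<bar> \<le> b\<^sup>2" using b2 by (rule sqrt_le_D)
  have za: "x1\<^sup>2 + y1\<^sup>2 \<le> a\<^sup>2" using a1 by (rule sqrt_le_D)
  have zb: "x2\<^sup>2 + y2\<^sup>2 \<le> b\<^sup>2" using b1 by (rule sqrt_le_D)
  have idn: "(x1\<^sup>2 + y1\<^sup>2) * (x2\<^sup>2 + y2\<^sup>2) = (x1*y2 - x2*y1)\<^sup>2 + (x1*x2 + y1*y2)\<^sup>2"
    by (simp add: power2_eq_square algebra_simps)
  have cs: "(x1*y2 - x2*y1)\<^sup>2 \<le> (a*b)\<^sup>2"
  proof -
    have "(x1*y2 - x2*y1)\<^sup>2 \<le> (x1\<^sup>2 + y1\<^sup>2) * (x2\<^sup>2 + y2\<^sup>2)"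
      unfolding idn by simp
    also have "\<dots> \<le> a\<^sup>2 * b\<^sup>2" using za zb by (simp add: mult_mono)
    finally show ?thesis by (simp add: power_mult_distrib)
  qed
  have "\<bar>x1*y2 - x2*y1\<bar> \<le> \<bar>a*b\<bar>" using cs abs_le_square_iff by blast
  then have cab: "\<bar>x1*y2 - x2*y1\<bar> \<le> a*b" using a0 b0 by simp
  have zsum: "sqrt ((x1 + x2)\<^sup>2 + (y1 + y2)\<^sup>2) \<le> a + b"
  proof -
    have "sqrt ((x1 + x2)\<^sup>2 + (y1 + y2)\<^sup>2) = norm ((x1,y1) + (x2,y2))" by (simp add: norm_Pair)
    also have "\<dots> \<le> norm (x1,y1) + norm (x2,y2)" by (rule norm_triangle_ineq)
    also have "\<dots> \<le> a + b" using a1 b1 by (simp add: norm_Pair)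
    finally show ?thesis .
  qed
  have tsum: "sqrt \<bar>t1 + t2 + (x1 * y2 - x2 * y1) / 2\<bar> \<le> a + b"
  proof -
    have "\<bar>t1 + t2 + (x1 * y2 - x2 * y1) / 2\<bar> \<le> (a+b)\<^sup>2"
    proof -
      have "\<bar>t1 + t2 + (x1 * y2 - x2 * y1) / 2\<bar> \<le> \<bar>t1\<bar> + \<bar>t2\<bar> + \<bar>x1 * y2 - x2 * y1\<bar> / 2"
        using abs_triangle_ineq[of "t1+t2" "(x1 * y2 - x2 * y1) / 2"] abs_triangle_ineq[of t1 t2] by simp
      also have "\<dots> \<le> a\<^sup>2 + b\<^sup>2 + a*b/2" using ta tb cab by simp
      also have "\<dots> \<le> (a+b)\<^sup>2" using a0 b0 by (simp add: power2_eq_square algebra_simps)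
      finally show ?thesis .
    qed
    then show ?thesis using a0 b0 by (intro real_le_lsqrt) auto
  qed
  have "hnorm (hmult u v) = max (sqrt ((x1 + x2)\<^sup>2 + (y1 + y2)\<^sup>2)) (sqrt \<bar>t1 + t2 + (x1 * y2 - x2 * y1) / 2\<bar>)"
    unfolding u v hmult_simp hnorm_simp by simp
  then show ?thesis using zsum tsum unfolding a_def b_def by simp
qed

lemma hdist_triangle: "hdist p r \<le> hdist p q + hdist q r"
proof -
  have "hmult (hinv r) p = hmult (hmult (hinv r) q) (hmult (hinv q) p)"
    by (cases p; cases q; cases r) (simp add: hmult_simp hinv_simp field_simps)
  then have "hdist p r = hnorm (hmult (hmult (hinv r) q) (hmult (hinv q) p))" by (simp add: hdist_def)
  also have "\<dots> \<le> hdist q r + hdist p q" unfolding hdist_def by (rule hnorm_mult)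
  finally show ?thesis by simp
qed

lemma rot_t: "snd (snd (rot a q)) = snd (snd q)"
  by (cases q) (simp add: rot_simp)

lemma rot_fst: "fst (rot a q) = fst q * cos a - fst (snd q) * sin a"
  by (cases q) (simp add: rot_simp)

lemma slope_rep_unique:
  assumes "{(a * y + b, y, b * y / 2 + c) | y. True} = {(a' * y + b', y, b' * y / 2 + c') | y::real. True}"
  shows "a = a'"
proof -
  have "(a * 0 + b, 0, b * 0 / 2 + c) \<in> {(a * y + b, y, b * y / 2 + c) | y. True}" by blast
  then have "(a * 0 + b, 0::real, b * 0 / 2 + c) \<in> {(a' * y + b', y, b' * y / 2 + c') | y::real. True}"
    unfolding assms .
  then obtain y0 where "(a * 0 + b, 0::real, b * 0 / 2 + c) = (a' * y0 + b', y0, b' * y0 / 2 + c')" by blast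
  then have e0: "b = b'" by simp
  have "(a * 1 + b, 1, b * 1 / 2 + c) \<in> {(a * y + b, y, b * y / 2 + c) | y. True}" by blast
  then have "(a * 1 + b, 1::real, b * 1 / 2 + c) \<in> {(a' * y + b', y, b' * y / 2 + c') | y::real. True}"
    unfolding assms .
  then obtain y1 where "(a * 1 + b, 1::real, b * 1 / 2 + c) = (a' * y1 + b', y1, b' * y1 / 2 + c')" by blast
  then have "a + b = a' + b'" by simp
  with e0 show ?thesis by simp
qed

lemma vsub_form:
  assumes "vertical_subgroup V"
  obtains a b where "(a,b) \<noteq> (0,0)" "\<And>x y t. (x,y,t) \<in> V \<longleftrightarrow> (\<exists>s. x = s * a \<and> y = s * b)"
proof -
  obtain x0 y0 a b where ab: "(a, b) \<noteq> (0, 0)" and V: "V = {(x, y, t). \<exists>s. x = x0 + s * a \<and> y = y0 + s * b}"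
    using assms unfolding vertical_subgroup_def vertical_plane_def by blast
  have "(0,0,0) \<in> V" using assms unfolding vertical_subgroup_def by blast
  then obtain s0 where s0: "0 = x0 + s0 * a" "0 = y0 + s0 * b" unfolding V by auto
  have "(x,y,t) \<in> V \<longleftrightarrow> (\<exists>s. x = s * a \<and> y = s * b)" for x y t
  proof
    assume "(x,y,t) \<in> V"
    then obtain s where "x = x0 + s * a" "y = y0 + s * b" unfolding V by auto
    then have "x = (s - s0) * a" "y = (s - s0) * b" using s0 by (simp_all add: algebra_simps)
    then show "\<exists>s. x = s * a \<and> y = s * b" by blast
  next
    assume "\<exists>s. x = s * a \<and> y = s * b"
    then obtain s where "x = s * a" "y = s * b" by blast
    then have "x = x0 + (s + s0) * a" "y = y0 + (s + s0) * b" using s0 by (simp_all add: algebra_simps)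
    then show "(x,y,t) \<in> V" unfolding V by blast
  qed
  then show ?thesis using ab that by blast
qed

lemma V_has_line:
  assumes "vertical_subgroup V"
  shows "\<exists>L. horizontal_line L \<and> L \<subseteq> V \<and> (0,0,0) \<in> L"
proof -
  obtain a b where ab: "(a,b) \<noteq> (0,0)" and V: "\<And>x y t. (x,y,t) \<in> V \<longleftrightarrow> (\<exists>s. x = s * a \<and> y = s * b)"
    using vsub_form[OF assms] by blast
  let ?L = "{hmult (0,0,0) (s * a, s * b, 0) | s. True}"
  have "horizontal_line ?L" unfolding horizontal_line_def using ab by blast
  moreover have "?L \<subseteq> V" using V by (auto simp: hmult_simp)
  moreover have "(0,0,0) \<in> ?L" by (auto simp: hmult_simp intro!: exI[of _ 0])
  ultimately show ?thesis by blast
qed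

lemma V_lines:
  assumes "vertical_subgroup V" "plane_angle V \<theta> = 0" "horizontal_line L" "L \<subseteq> V"
  shows "\<exists>c. \<forall>q\<in>L. fst (rot (-\<theta>) q) = 0 \<and> snd (snd q) = c"
proof -
  obtain a b where ab: "(a,b) \<noteq> (0,0)" and V: "\<And>x y t. (x,y,t) \<in> V \<longleftrightarrow> (\<exists>s. x = s * a \<and> y = s * b)"
    using vsub_form[OF assms(1)] by blast
  define V' where "V' = rot (-\<theta>) ` V"
  have ex: "\<exists>L. horizontal_line L \<and> L \<subseteq> V'"
  proof -
    define a' where "a' = a * cos (-\<theta>) - b * sin (-\<theta>)"
    define b' where "b' = a * sin (-\<theta>) + b * cos (-\<theta>)"
    have "rot \<theta> (a', b', 0) = (a, b, 0)" using rot_rot(1)[of "-\<theta>" "(a,b,0)"]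
      by (simp add: a'_def b'_def rot_simp)
    then have ab': "(a',b') \<noteq> (0,0)" using ab by (auto simp: rot_simp)
    let ?L = "{hmult (0,0,0) (s * a', s * b', 0) | s. True}"
    have "horizontal_line ?L" unfolding horizontal_line_def using ab' by blast
    moreover have "?L \<subseteq> V'"
    proof
      fix q assume "q \<in> ?L"
      then obtain s where q: "q = (s * a', s * b', 0)" by (auto simp: hmult_simp)
      have "q = rot (-\<theta>) (s * a, s * b, 0)" unfolding q a'_def b'_def rot_simp by (simp add: algebra_simps)
      moreover have "(s * a, s * b, 0) \<in> V" using V by blast
      ultimately show "q \<in> V'" unfolding V'_def by blast
    qed
    ultimately show ?thesis by blast
  qed
  define L0 where "L0 = (SOME L. horizontal_line L \<and> L \<subseteq> V')"
  have L0: "horizontal_line L0" "L0 \<subseteq> V'" using someI_ex[OF ex] unfolding L0_def by blast+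
  have sl: "line_slope L0 = 0" using assms(2) unfolding plane_angle_def plane_slope_def V'_def[symmetric] L0_def .
  have ex2: "\<exists>a b c. L0 = {(a * y + b, y, b * y / 2 + c) | y. True}"
  proof (rule ccontr)
    assume "\<not> ?thesis"
    then have "line_slope L0 = \<infinity>" unfolding line_slope_def by simp
    with sl show False by simp
  qed
  then obtain a0 b0 c0 where L0e: "L0 = {(a0 * y + b0, y, b0 * y / 2 + c0) | y. True}" by blast
  have "(THE a. \<exists>b c. L0 = {(a * y + b, y, b * y / 2 + c) | y. True}) = a0"
  proof (rule the_equality)
    show "\<exists>b c. L0 = {(a0 * y + b, y, b * y / 2 + c) | y. True}" using L0e by blast
    fix a1 assume "\<exists>b c. L0 = {(a1 * y + b, y, b * y / 2 + c) | y. True}"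
    then obtain b1 c1 where "L0 = {(a1 * y + b1, y, b1 * y / 2 + c1) | y. True}" by blast
    then have "{(a1 * y + b1, y, b1 * y / 2 + c1) | y. True} = {(a0 * y + b0, y, b0 * y / 2 + c0) | y::real. True}"
      using L0e by simp
    then show "a1 = a0" by (rule slope_rep_unique)
  qed
  moreover have "line_slope L0 = ereal \<bar>THE a. \<exists>b c. L0 = {(a * y + b, y, b * y / 2 + c) | y. True}\<bar>"
    unfolding line_slope_def using ex2 by (simp only: if_True)
  ultimately have "line_slope L0 = ereal \<bar>a0\<bar>" by simp
  then have a00: "a0 = 0" using sl by (simp add: zero_ereal_def)
  have inV: "rot \<theta> (b0, y, b0 * y / 2 + c0) \<in> V" for y
  proof -
    have "(a0 * y + b0, y, b0 * y / 2 + c0) \<in> L0" unfolding L0e by blast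
    then have "(b0, y, b0 * y / 2 + c0) \<in> L0" using a00 by simp
    then have "(b0, y, b0 * y / 2 + c0) \<in> V'" using L0(2) by blast
    then obtain q where "q \<in> V" "(b0, y, b0 * y / 2 + c0) = rot (-\<theta>) q" unfolding V'_def by blast
    then show ?thesis using rot_rot(2)[of \<theta> q] by simp
  qed
  obtain s0 where s0: "b0 * cos \<theta> - 0 * sin \<theta> = s0 * a" "b0 * sin \<theta> + 0 * cos \<theta> = s0 * b"
    using inV[of 0] V by (auto simp: rot_simp)
  obtain s1 where s1: "b0 * cos \<theta> - 1 * sin \<theta> = s1 * a" "b0 * sin \<theta> + 1 * cos \<theta> = s1 * b"
    using inV[of 1] V by (auto simp: rot_simp)
  have d1: "- sin \<theta> = (s1 - s0) * a" "cos \<theta> = (s1 - s0) * b" using s0 s1 by (simp_all add: algebra_simps)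
  have "s1 - s0 \<noteq> 0"
  proof
    assume "s1 - s0 = 0"
    then have "sin \<theta> = 0" "cos \<theta> = 0" using d1 by simp_all
    then show False using sin_cos_squared_add[of \<theta>] by simp
  qed
  moreover have "(s1 - s0) * (a * cos \<theta> + b * sin \<theta>) = 0"
  proof -
    have "(s1 - s0) * (a * cos \<theta> + b * sin \<theta>) = ((s1-s0)*a) * cos \<theta> + ((s1-s0)*b) * sin \<theta>"
      by (simp add: algebra_simps)
    also have "\<dots> = - sin \<theta> * cos \<theta> + cos \<theta> * sin \<theta>" unfolding d1[symmetric] by simp
    also have "\<dots> = 0" by simp
    finally show ?thesis .
  qed
  ultimately have perp: "a * cos \<theta> + b * sin \<theta> = 0" by simp
  have xV: "fst (rot (-\<theta>) q) = 0" if "q \<in> V" for q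
  proof -
    obtain x y t where q: "q = (x,y,t)" by (cases q) auto
    have "\<exists>s. x = s * a \<and> y = s * b" using V[of x y t] that q by simp
    then obtain s where "x = s * a" "y = s * b" by blast
    then have "fst (rot (-\<theta>) q) = s * (a * cos \<theta> + b * sin \<theta>)" unfolding q by (simp add: rot_simp algebra_simps)
    then show ?thesis using perp by simp
  qed
  obtain p \<alpha> \<beta> where ab2: "(\<alpha>, \<beta>) \<noteq> (0, 0)" and L: "L = {hmult p (s * \<alpha>, s * \<beta>, 0) | s. True}"
    using assms(3) unfolding horizontal_line_def by blast
  obtain xp yp tp where p: "p = (xp, yp, tp)" by (cases p) auto
  have xs: "(xp + s * \<alpha>) * cos \<theta> + (yp + s * \<beta>) * sin \<theta> = 0" for s
  proof -
    have "hmult p (s * \<alpha>, s * \<beta>, 0) \<in> V" using assms(4) L by blast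
    then have "fst (rot (-\<theta>) (hmult p (s * \<alpha>, s * \<beta>, 0))) = 0" by (rule xV)
    then show ?thesis unfolding p by (simp add: hmult_simp rot_simp)
  qed
  have e1: "xp * cos \<theta> + yp * sin \<theta> = 0" using xs[of 0] by simp
  have e2: "\<alpha> * cos \<theta> + \<beta> * sin \<theta> = 0" using xs[of 1] e1 by (simp add: algebra_simps)
  have c1: "xp * cos \<theta> = - (yp * sin \<theta>)" using e1 by linarith
  have c2: "\<alpha> * cos \<theta> = - (\<beta> * sin \<theta>)" using e2 by linarith
  have c3: "yp * sin \<theta> = - (xp * cos \<theta>)" using e1 by linarith
  have c4: "\<beta> * sin \<theta> = - (\<alpha> * cos \<theta>)" using e2 by linarith
  have "cos \<theta> * (xp * \<beta> - \<alpha> * yp) = 0"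
  proof -
    have "cos \<theta> * (xp * \<beta> - \<alpha> * yp) = (xp * cos \<theta>) * \<beta> - (\<alpha> * cos \<theta>) * yp" by (simp add: algebra_simps)
    also have "\<dots> = (- (yp * sin \<theta>)) * \<beta> - (- (\<beta> * sin \<theta>)) * yp" by (simp only: c1 c2)
    also have "\<dots> = 0" by (simp add: algebra_simps)
    finally show ?thesis .
  qed
  moreover have "sin \<theta> * (xp * \<beta> - \<alpha> * yp) = 0"
  proof -
    have "sin \<theta> * (xp * \<beta> - \<alpha> * yp) = xp * (\<beta> * sin \<theta>) - \<alpha> * (yp * sin \<theta>)" by (simp add: algebra_simps)
    also have "\<dots> = xp * (- (\<alpha> * cos \<theta>)) - \<alpha> * (- (xp * cos \<theta>))" by (simp only: c3 c4)
    also have "\<dots> = 0" by (simp add: algebra_simps)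
    finally show ?thesis .
  qed
  ultimately have det: "xp * \<beta> - \<alpha> * yp = 0"
  proof -
    assume h: "cos \<theta> * (xp * \<beta> - \<alpha> * yp) = 0" "sin \<theta> * (xp * \<beta> - \<alpha> * yp) = 0"
    show ?thesis
    proof (rule ccontr)
      assume "xp * \<beta> - \<alpha> * yp \<noteq> 0"
      then have "cos \<theta> = 0" "sin \<theta> = 0" using h by simp_all
      then show False using sin_cos_squared_add[of \<theta>] by simp
    qed
  qed
  show ?thesis
  proof (intro exI[of _ tp] ballI conjI)
    fix q assume "q \<in> L"
    then obtain s where q: "q = hmult p (s * \<alpha>, s * \<beta>, 0)" using L by blast
    show "fst (rot (-\<theta>) q) = 0" using xV \<open>q \<in> L\<close> assms(4) by blast
    have "snd (snd q) = tp + s * (xp * \<beta> - \<alpha> * yp) / 2" unfolding q p by (simp add: hmult_simp algebra_simps)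
    then show "snd (snd q) = tp" using det by simp
  qed
qed

lemma meas_cbox2:
  assumes "a \<le> b" "c \<le> (d::real)"
  shows "emeasure lborel (cbox (a,c) (b,d)) = ennreal ((b-a)*(d-c))"
  using assms by (simp add: emeasure_lborel_cbox_eq Basis_prod_def inner_Pair)

lemma powr3: "0 \<le> (x::real) \<Longrightarrow> x powr 3 = x ^ 3"
  by (cases "x = 0") (simp_all add: powr_realpow)

lemma div4: "0 \<le> (x::real) \<Longrightarrow> ennreal x \<le> 4 * s \<Longrightarrow> ennreal (x/4) \<le> s"
proof -
  assume x: "0 \<le> x" "ennreal x \<le> 4 * s"
  have "ennreal x = ennreal (4 * (x/4))" by simp
  also have "\<dots> = ennreal 4 * ennreal (x/4)" by (rule ennreal_mult) (use x in auto)
  finally have "ennreal x = 4 * ennreal (x/4)" by simp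
  then have "4 * ennreal (x/4) \<le> 4 * s" using x(2) by simp
  then show ?thesis by (subst (asm) ennreal_mult_le_mult_iff) auto
qed

lemma hm_lower:
  fixes S :: "heis set" and \<pi> :: "heis \<Rightarrow> real \<times> real"
  assumes lip: "\<And>p q. p \<in> S \<Longrightarrow> q \<in> S \<Longrightarrow> \<bar>fst (\<pi> p) - fst (\<pi> q)\<bar> \<le> hdist p q \<and> \<bar>snd (\<pi> p) - snd (\<pi> q)\<bar> \<le> (hdist p q)\<^sup>2"
    and sub: "cbox (a,c) (b,d) \<subseteq> \<pi> ` S" and ab: "a \<le> b" "c \<le> d"
  shows "ennreal ((b-a)*(d-c)/4) \<le> hausdorff_measure hdist 3 S"
proof -
  have "ennreal ((b-a)*(d-c)/4) \<le> hausdorff_content hdist 3 1 S"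
  proof -
    have "ennreal ((b-a)*(d-c)) \<le> 4 * (\<Sum>i. ennreal (mdiam hdist (C i) powr 3))"
      if C: "S \<subseteq> (\<Union>i. C i)" "\<And>i. bdd_above {hdist x y | x y. x \<in> C i \<and> y \<in> C i}" for C :: "nat \<Rightarrow> heis set"
    proof -
      define md where "md i = mdiam hdist (C i)" for i
      define p where "p i = (SOME p. p \<in> C i \<and> p \<in> S)" for i
      define Bx where "Bx i = (if C i \<inter> S = {} then {} else
          cbox (fst (\<pi> (p i)) - md i, snd (\<pi> (p i)) - (md i)\<^sup>2) (fst (\<pi> (p i)) + md i, snd (\<pi> (p i)) + (md i)\<^sup>2))" for i
      have dle: "hdist x y \<le> md i" if "x \<in> C i" "y \<in> C i" for x y i
      proof -
        have "C i \<noteq> {}" using that by blast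
        then have "md i = Sup {hdist x y | x y. x \<in> C i \<and> y \<in> C i}" unfolding md_def mdiam_def by simp
        moreover have "hdist x y \<in> {hdist x y | x y. x \<in> C i \<and> y \<in> C i}" using that by blast
        then have "hdist x y \<le> Sup {hdist x y | x y. x \<in> C i \<and> y \<in> C i}" by (rule cSup_upper) (rule C(2))
        ultimately show ?thesis by simp
      qed
      have md0: "0 \<le> md i" for i
      proof (cases "C i = {}")
        case True then show ?thesis unfolding md_def mdiam_def by simp
      next
        case False
        then obtain x where "x \<in> C i" by blast
        then show ?thesis using dle[of x i x] hdist_nonneg[of x x] by linarith
      qed
      have pS: "p i \<in> C i \<and> p i \<in> S" if "C i \<inter> S \<noteq> {}" for i
      proof -
        have "\<exists>p. p \<in> C i \<and> p \<in> S" using that by blast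
        then show ?thesis unfolding p_def by (rule someI_ex)
      qed
      have mB: "emeasure lborel (Bx i) \<le> ennreal (4 * (md i) ^ 3)" for i
      proof (cases "C i \<inter> S = {}")
        case True then show ?thesis unfolding Bx_def by simp
      next
        case False
        have "Bx i = cbox (fst (\<pi> (p i)) - md i, snd (\<pi> (p i)) - (md i)\<^sup>2) (fst (\<pi> (p i)) + md i, snd (\<pi> (p i)) + (md i)\<^sup>2)"
          using False by (simp add: Bx_def)
        also have "emeasure lborel \<dots> = ennreal ((2 * md i) * (2 * (md i)\<^sup>2))"
          using md0[of i] by (subst meas_cbox2) (auto simp: algebra_simps)
        finally have "emeasure lborel (Bx i) = ennreal ((2 * md i) * (2 * (md i)\<^sup>2))" .
        also have "\<dots> = ennreal (4 * (md i) ^ 3)" by (simp add: power2_eq_square power3_eq_cube mult.assoc)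
        finally show ?thesis by simp
      qed
      have cov: "cbox (a,c) (b,d) \<subseteq> (\<Union>i. Bx i)"
      proof
        fix z assume "z \<in> cbox (a,c) (b,d)"
        then obtain q where q: "q \<in> S" "z = \<pi> q" using sub by blast
        then obtain i where qi: "q \<in> C i" using C(1) by blast
        then have ne: "C i \<inter> S \<noteq> {}" using q by blast
        then have pi: "p i \<in> C i" "p i \<in> S" using pS by blast+
        have h: "hdist q (p i) \<le> md i" using dle qi pi by blast
        have h2: "(hdist q (p i))\<^sup>2 \<le> (md i)\<^sup>2" using h hdist_nonneg by (simp add: power_mono)
        have l: "\<bar>fst (\<pi> q) - fst (\<pi> (p i))\<bar> \<le> hdist q (p i)" "\<bar>snd (\<pi> q) - snd (\<pi> (p i))\<bar> \<le> (hdist q (p i))\<^sup>2"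
          using lip[OF q(1) pi(2)] by auto
        obtain z1 z2 where z: "z = (z1, z2)" by (cases z) auto
        have zq: "z1 = fst (\<pi> q)" "z2 = snd (\<pi> q)" using q(2) z by (metis fst_conv snd_conv)+
        have "(z1,z2) \<in> cbox (fst (\<pi> (p i)) - md i, snd (\<pi> (p i)) - (md i)\<^sup>2) (fst (\<pi> (p i)) + md i, snd (\<pi> (p i)) + (md i)\<^sup>2)"
          unfolding cbox_Pair_iff mem_box_real zq using l h h2 unfolding abs_le_iff by (intro conjI; linarith)
        then have "z \<in> Bx i" using ne z by (simp add: Bx_def)
        then show "z \<in> (\<Union>i. Bx i)" by blast
      qed
      have "ennreal ((b-a)*(d-c)) = emeasure lborel (cbox (a,c) (b,d))" using meas_cbox2 ab by simp
      also have "\<dots> \<le> emeasure lborel (\<Union>i. Bx i)" using cov by (intro emeasure_mono) (auto simp: Bx_def)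
      also have "\<dots> \<le> (\<Sum>i. emeasure lborel (Bx i))" by (intro emeasure_subadditive_countably) (auto simp: Bx_def)
      also have "\<dots> \<le> (\<Sum>i. ennreal (4 * (md i) ^ 3))" using mB by (intro suminf_le) auto
      also have "\<dots> = (\<Sum>i. 4 * ennreal (md i powr 3))"
      proof -
        have "ennreal (4 * (md i)^3) = 4 * ennreal (md i powr 3)" for i
          using md0[of i] by (simp add: powr3 ennreal_mult)
        then show ?thesis by presburger
      qed
      also have "\<dots> = 4 * (\<Sum>i. ennreal (mdiam hdist (C i) powr 3))" unfolding md_def by simp
      finally show ?thesis .
    qed
    then have "ennreal ((b-a)*(d-c)/4) \<le> (\<Sum>i. ennreal (mdiam hdist (C i) powr 3))"
      if "S \<subseteq> (\<Union>i. C i)" "\<And>i. bdd_above {hdist x y | x y. x \<in> C i \<and> y \<in> C i}" for C :: "nat \<Rightarrow> heis set"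
      using that div4 ab by simp
    then show ?thesis unfolding hausdorff_content_def
      by (intro INF_greatest) auto
  qed
  also have "\<dots> \<le> hausdorff_measure hdist 3 S" unfolding hausdorff_measure_def
    by (rule SUP_upper) auto
  finally show ?thesis .
qed

lemma miranda:
  fixes G :: "real \<times> real \<Rightarrow> real \<times> real"
  assumes ab: "a1 < b1" "a2 < b2" and cont: "continuous_on (cbox (a1,a2) (b1,b2)) G"
    and e1: "\<And>t. a2 \<le> t \<Longrightarrow> t \<le> b2 \<Longrightarrow> fst (G (a1,t)) < 0 \<and> fst (G (b1,t)) > 0"
    and e2: "\<And>y. a1 \<le> y \<Longrightarrow> y \<le> b1 \<Longrightarrow> snd (G (y,a2)) < 0 \<and> snd (G (y,b2)) > 0"
  shows "\<exists>w\<in>cbox (a1,a2) (b1,b2). G w = (0,0)"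
proof -
  define S where "S = cbox (a1,a2) (b1,b2)"
  define h where "h w = (max a1 (min b1 (fst w - fst (G w))), max a2 (min b2 (snd w - snd (G w))))" for w
  have "compact S" "convex S" unfolding S_def by (simp_all add: compact_cbox convex_box)
  moreover have "interior S \<noteq> {}"
  proof -
    have "((a1+b1)/2, (a2+b2)/2) \<in> box (a1,a2) (b1,b2)"
      using ab by (simp add: mem_box Basis_prod_def inner_Pair)
    then show ?thesis unfolding S_def interior_cbox by blast
  qed
  moreover have "continuous_on S h" unfolding h_def
    using cont unfolding S_def by (intro continuous_intros) auto
  moreover have "h \<in> S \<rightarrow> S"
  proof
    fix w assume "w \<in> S"
    show "h w \<in> S" unfolding h_def S_def cbox_Pair_iff mem_box_real using ab by simp
  qed
  ultimately obtain x where x: "x \<in> S" "h x = x" by (rule brouwer_weak)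
  obtain x1 x2 where xx: "x = (x1, x2)" by (cases x) auto
  obtain g1 g2 where gg: "G x = (g1, g2)" by (cases "G x") auto
  have r1: "a1 \<le> x1" "x1 \<le> b1" "a2 \<le> x2" "x2 \<le> b2" using x(1) unfolding S_def xx cbox_Pair_iff mem_box_real by auto
  have f1: "max a1 (min b1 (x1 - g1)) = x1" and f2: "max a2 (min b2 (x2 - g2)) = x2"
  proof -
    have "h x = (max a1 (min b1 (x1 - g1)), max a2 (min b2 (x2 - g2)))" unfolding h_def using gg xx by simp
    then have "(max a1 (min b1 (x1 - g1)), max a2 (min b2 (x2 - g2))) = (x1, x2)" using x(2) xx by simp
    then show "max a1 (min b1 (x1 - g1)) = x1" "max a2 (min b2 (x2 - g2)) = x2" by simp_all
  qed
  have c1: "x1 = a1 \<Longrightarrow> g1 < 0" using e1[OF r1(3,4)] gg xx by auto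
  have c2: "x1 = b1 \<Longrightarrow> g1 > 0" using e1[OF r1(3,4)] gg xx by auto
  have c3: "x2 = a2 \<Longrightarrow> g2 < 0" using e2[OF r1(1,2)] gg xx by auto
  have c4: "x2 = b2 \<Longrightarrow> g2 > 0" using e2[OF r1(1,2)] gg xx by auto
  have "g1 = 0" using f1 c1 c2 r1 ab unfolding max_def min_def by (auto split: if_splits)
  moreover have "g2 = 0" using f2 c3 c4 r1 ab unfolding max_def min_def by (auto split: if_splits)
  ultimately show ?thesis using x(1) gg unfolding S_def by blast
qed

lemma dpar_simp: "dpar (y,t) (\<eta>,s) = max \<bar>y - \<eta>\<bar> (sqrt \<bar>t - s\<bar>)"
  by (simp add: dpar_def)

lemma core_pos:
  fixes Y T :: "real \<times> real \<Rightarrow> real" and y0 t0 R D l M :: real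
  assumes M1: "M \<ge> 1" and l0: "l > 0" and RR: "R = 4 * M^3 * l" and D0: "0 \<le> D" and Dl: "D < l/8"
    and BB: "B = cbox (y0-R, t0-R\<^sup>2) (y0+R, t0+R\<^sup>2)"
    and contY: "continuous_on B Y" and contT: "continuous_on B T"
    and H2: "\<And>y y' t. (y,t) \<in> B \<Longrightarrow> (y',t) \<in> B \<Longrightarrow> \<bar>T (y,t) - T (y',t)\<bar> \<le> 4 * D\<^sup>2"
    and H3: "\<And>w v. w \<in> B \<Longrightarrow> v \<in> B \<Longrightarrow> dpar w v / M - 2 * D \<le> max \<bar>Y w - Y v\<bar> (sqrt \<bar>T w - T v\<bar>)"
    and H4: "\<And>w v. w \<in> B \<Longrightarrow> v \<in> B \<Longrightarrow> \<bar>Y w - Y v\<bar> \<le> M * dpar w v + 2 * D"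
    and orient: "Y (y0-R, t0) \<le> Y (y0+R, t0)"
  shows "\<exists>a b c d. b - a \<ge> 5/2 * l \<and> d - c \<ge> 2 * l\<^sup>2 \<and> cbox (a,c) (b,d) \<subseteq> (\<lambda>w. (Y w, T w)) ` B"
proof -
  have M0: "M > 0" using M1 by simp
  have M2: "M^2 \<ge> 1" using M1 by (simp add: one_le_power)
  have M3: "M^3 \<ge> M"
  proof -
    have "M * 1 \<le> M * M^2" using M2 M0 by (intro mult_left_mono) auto
    then show ?thesis by (simp add: power3_eq_cube power2_eq_square mult.assoc)
  qed
  define \<rho> where "\<rho> = 2 * M * l"
  have \<rho>0: "\<rho> > 0" unfolding \<rho>_def using M0 l0 by simp
  have \<rho>R: "\<rho> \<le> R"
  proof -
    have "M * l \<le> M^3 * l" using M3 l0 by (simp add: mult_right_mono)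
    moreover have "M^3 * l > 0" using M0 l0 by simp
    ultimately show ?thesis unfolding \<rho>_def RR by linarith
  qed
  have \<rho>R2: "\<rho>\<^sup>2 \<le> R\<^sup>2" using \<rho>R \<rho>0 by (simp add: power_mono)
  have R0: "R > 0" using \<rho>0 \<rho>R by simp
  define tm where "tm = t0 - \<rho>\<^sup>2"
  define tp where "tp = t0 + \<rho>\<^sup>2"
  have inB: "(y,t) \<in> B" if "y0 - R \<le> y" "y \<le> y0 + R" "tm \<le> t" "t \<le> tp" for y t
    using that \<rho>R2 unfolding BB tm_def tp_def cbox_Pair_iff mem_box_real by simp
  define P where "P = Y (y0-R, t0)"
  define Q where "Q = Y (y0+R, t0)"
  have sq4: "sqrt (4 * D\<^sup>2) = 2 * D"
  proof -
    have "sqrt (4 * D\<^sup>2) = sqrt ((2*D)\<^sup>2)" by (simp add: power2_eq_square)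
    also have "\<dots> = \<bar>2*D\<bar>" by (rule real_sqrt_abs)
    also have "\<dots> = 2*D" using D0 by simp
    finally show ?thesis .
  qed
  have sqT: "sqrt \<bar>T (y,t) - T (y',t)\<bar> \<le> 2 * D" if "(y,t) \<in> B" "(y',t) \<in> B" for y y' t
    using H2[OF that] sq4 by (metis real_sqrt_le_iff)
  have tl0: "tm \<le> t0" "t0 \<le> tp" unfolding tm_def tp_def by simp_all
  have b1: "(y0-R, t0) \<in> B" "(y0+R, t0) \<in> B" using inB tl0 R0 by simp_all
  have step1: "Q - P \<ge> 8 * M^2 * l - 2 * D"
  proof -
    have "dpar (y0+R, t0) (y0-R, t0) = 2 * R" using R0 by (simp add: dpar_simp)
    then have "2 * R / M - 2 * D \<le> max \<bar>Q - P\<bar> (sqrt \<bar>T (y0+R, t0) - T (y0-R, t0)\<bar>)"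
      using H3[OF b1(2) b1(1)] unfolding P_def Q_def by simp
    moreover have "2 * R / M = 8 * M^2 * l" unfolding RR using M0 by (simp add: field_simps power2_eq_square power3_eq_cube)
    moreover have "sqrt \<bar>T (y0+R, t0) - T (y0-R, t0)\<bar> \<le> 2 * D" using sqT b1 by blast
    moreover have "8 * M^2 * l \<ge> 8 * l" using M2 l0 by simp
    ultimately show ?thesis using orient Dl l0 unfolding P_def Q_def by linarith
  qed
  have step2: "\<bar>Y (y,t) - Y (y,t0)\<bar> \<le> 2 * M^2 * l + 2 * D"
    if "y = y0 - R \<or> y = y0 + R" "tm \<le> t" "t \<le> tp" for y t
  proof -
    have w: "(y,t) \<in> B" "(y,t0) \<in> B" using inB that tl0 R0 by auto
    have "\<bar>t - t0\<bar> \<le> \<rho>\<^sup>2" using that unfolding tm_def tp_def by simp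
    then have "sqrt \<bar>t - t0\<bar> \<le> \<rho>" using \<rho>0 by (simp add: real_le_lsqrt)
    then have "dpar (y,t) (y,t0) \<le> \<rho>" by (simp add: dpar_simp)
    then have "M * dpar (y,t) (y,t0) \<le> M * \<rho>" using M0 by simp
    moreover have "M * \<rho> = 2 * M^2 * l" unfolding \<rho>_def by (simp add: power2_eq_square)
    ultimately show ?thesis using H4[OF w] by linarith
  qed
  define a where "a = P + 2 * M^2 * l + l/2"
  define b where "b = a + 5/2 * l"
  have left: "Y (y0 - R, t) < a" if "tm \<le> t" "t \<le> tp" for t
    using step2[of "y0 - R" t] that Dl l0 D0 unfolding a_def P_def abs_le_iff by linarith
  have right: "Y (y0 + R, t) > b" if "tm \<le> t" "t \<le> tp" for t
  proof -
    have "Y (y0 + R, t) \<ge> Q - (2 * M^2 * l + 2 * D)" using step2[of "y0 + R" t] that unfolding Q_def by (simp add: abs_le_iff)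
    moreover have "4 * M^2 * l \<ge> 4 * l" using M2 l0 by simp
    ultimately show ?thesis using step1 Dl l0 unfolding b_def a_def by linarith
  qed
  have contline: "continuous_on {y0-R..y0+R} (\<lambda>y. Y (y, t))" if "tm \<le> t" "t \<le> tp" for t
  proof -
    have "continuous_on {y0-R..y0+R} (\<lambda>y. (y, t))" by (intro continuous_intros)
    moreover have "(\<lambda>y. (y, t)) ` {y0-R..y0+R} \<subseteq> B" using inB that by auto
    ultimately show ?thesis using continuous_on_compose2[OF contY] by blast
  qed
  have ivt: "\<exists>y. y0 - R \<le> y \<and> y \<le> y0 + R \<and> Y (y, t) = a" if "tm \<le> t" "t \<le> tp" for t
  proof -
    have "Y (y0 - R, t) \<le> a" "a \<le> Y (y0 + R, t)" using left[OF that] right[OF that] l0 unfolding b_def by linarith+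
    then show ?thesis using IVT'[of "\<lambda>y. Y (y, t)" "y0 - R" a "y0 + R"] contline[OF that] R0 by simp
  qed
  obtain y1 where y1: "y0 - R \<le> y1" "y1 \<le> y0 + R" "Y (y1, tm) = a" using ivt[of tm] tl0 by auto
  obtain y2 where y2: "y0 - R \<le> y2" "y2 \<le> y0 + R" "Y (y2, tp) = a" using ivt[of tp] tl0 by auto
  have w12: "(y1, tm) \<in> B" "(y2, tp) \<in> B" using inB y1 y2 tl0 by auto
  define t1 where "t1 = T (y1, tm)"
  define t2 where "t2 = T (y2, tp)"
  have gap: "\<bar>t1 - t2\<bar> \<ge> 49/16 * l\<^sup>2"
  proof -
    have "sqrt \<bar>tm - tp\<bar> \<ge> \<rho>"
    proof -
      have "\<bar>tm - tp\<bar> = 2 * \<rho>\<^sup>2" unfolding tm_def tp_def by simp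
      then have "\<bar>tm - tp\<bar> \<ge> \<rho>\<^sup>2" by simp
      then show ?thesis using \<rho>0 by (simp add: real_le_rsqrt)
    qed
    then have "dpar (y1, tm) (y2, tp) \<ge> \<rho>" by (simp add: dpar_simp)
    then have "dpar (y1, tm) (y2, tp) / M \<ge> \<rho> / M" using M0 by (simp add: divide_right_mono)
    moreover have "\<rho> / M = 2 * l" unfolding \<rho>_def using M0 by simp
    moreover have "dpar (y1, tm) (y2, tp) / M - 2 * D \<le> max 0 (sqrt \<bar>t1 - t2\<bar>)"
      using H3[OF w12] y1 y2 unfolding t1_def t2_def by simp
    moreover have "max 0 (sqrt \<bar>t1 - t2\<bar>) = sqrt \<bar>t1 - t2\<bar>" by simp
    ultimately have "7/4 * l \<le> sqrt \<bar>t1 - t2\<bar>" using Dl l0 by linarith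
    then have "(7/4 * l)\<^sup>2 \<le> \<bar>t1 - t2\<bar>" using l0 by (metis abs_ge_zero less_eq_real_def mult_pos_pos power_mono real_sqrt_pow2 zero_less_divide_iff zero_less_numeral)
    then show ?thesis by (simp add: power2_eq_square)
  qed
  have D2: "4 * D\<^sup>2 \<le> l\<^sup>2 / 16"
  proof -
    have "D\<^sup>2 \<le> (l/8)\<^sup>2" using D0 Dl by (simp add: power_mono)
    then show ?thesis by (simp add: power2_eq_square)
  qed
  have lsq: "l\<^sup>2 > 0" using l0 by simp
  define c where "c = min t1 t2 + l\<^sup>2 / 2"
  define d where "d = c + 2 * l\<^sup>2"
  define s :: real where "s = (if t1 < t2 then 1 else -1)"
  have bot: "s * (T (y, tm) - e) < 0" if "y0 - R \<le> y" "y \<le> y0 + R" "c \<le> e" "e \<le> d" for y e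
  proof -
    have h: "\<bar>T (y, tm) - t1\<bar> \<le> 4 * D\<^sup>2" unfolding t1_def using H2 inB that y1 tl0 by simp
    show ?thesis
    proof (cases "t1 < t2")
      case True
      then have "s = 1" "c = t1 + l\<^sup>2/2" unfolding s_def c_def by auto
      moreover have "T (y, tm) < e" using h that D2 lsq \<open>c = t1 + l\<^sup>2/2\<close> unfolding abs_le_iff by linarith
      ultimately show ?thesis by simp
    next
      case False
      then have "s = -1" "c = t2 + l\<^sup>2/2" "t1 - t2 \<ge> 49/16 * l\<^sup>2" unfolding s_def c_def using gap by auto
      moreover have "T (y, tm) > e" using h that D2 lsq \<open>c = t2 + l\<^sup>2/2\<close> \<open>t1 - t2 \<ge> 49/16 * l\<^sup>2\<close> unfolding abs_le_iff d_def by linarith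
      ultimately show ?thesis by simp
    qed
  qed
  have top: "s * (T (y, tp) - e) > 0" if "y0 - R \<le> y" "y \<le> y0 + R" "c \<le> e" "e \<le> d" for y e
  proof -
    have h: "\<bar>T (y, tp) - t2\<bar> \<le> 4 * D\<^sup>2" unfolding t2_def using H2 inB that y2 tl0 by simp
    show ?thesis
    proof (cases "t1 < t2")
      case True
      then have "s = 1" "c = t1 + l\<^sup>2/2" "t2 - t1 \<ge> 49/16 * l\<^sup>2" unfolding s_def c_def using gap by auto
      moreover have "T (y, tp) > e" using h that D2 lsq \<open>c = t1 + l\<^sup>2/2\<close> \<open>t2 - t1 \<ge> 49/16 * l\<^sup>2\<close> unfolding abs_le_iff d_def by linarith
      ultimately show ?thesis by simp
    next
      case False
      then have "s = -1" "c = t2 + l\<^sup>2/2" unfolding s_def c_def by auto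
      moreover have "T (y, tp) < e" using h that D2 lsq \<open>c = t2 + l\<^sup>2/2\<close> unfolding abs_le_iff by linarith
      ultimately show ?thesis by simp
    qed
  qed
  have "cbox (a,c) (b,d) \<subseteq> (\<lambda>w. (Y w, T w)) ` B"
  proof
    fix z assume z: "z \<in> cbox (a,c) (b,d)"
    obtain A Bt where zz: "z = (A, Bt)" by (cases z) auto
    have A: "a \<le> A" "A \<le> b" and Bt: "c \<le> Bt" "Bt \<le> d" using z unfolding zz cbox_Pair_iff mem_box_real by auto
    define G where "G w = (Y w - A, s * (T w - Bt))" for w
    have sub: "cbox (y0-R, tm) (y0+R, tp) \<subseteq> B"
      using inB by (auto simp: cbox_Pair_iff mem_box_real)
    have "\<exists>w\<in>cbox (y0-R, tm) (y0+R, tp). G w = (0,0)"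
    proof (rule miranda)
      show "y0 - R < y0 + R" using R0 by simp
      show "tm < tp" unfolding tm_def tp_def using \<rho>0 by simp
      show "continuous_on (cbox (y0-R, tm) (y0+R, tp)) G" unfolding G_def
        using continuous_on_subset[OF contY sub] continuous_on_subset[OF contT sub]
        by (intro continuous_intros) auto
      show "fst (G (y0 - R, t)) < 0 \<and> fst (G (y0 + R, t)) > 0" if "tm \<le> t" "t \<le> tp" for t
        using left[OF that] right[OF that] A unfolding G_def by simp
      show "snd (G (y, tm)) < 0 \<and> snd (G (y, tp)) > 0" if "y0 - R \<le> y" "y \<le> y0 + R" for y
        using bot[OF that Bt] top[OF that Bt] unfolding G_def by simp
    qed
    then obtain w where w: "w \<in> cbox (y0-R, tm) (y0+R, tp)" "G w = (0,0)" by blast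
    have "s \<noteq> 0" unfolding s_def by simp
    then have "Y w = A" "T w = Bt" using w(2) unfolding G_def by simp_all
    then show "z \<in> (\<lambda>w. (Y w, T w)) ` B" using w(1) sub zz by blast
  qed
  moreover have "b - a \<ge> 5/2 * l" "d - c \<ge> 2 * l\<^sup>2" unfolding b_def d_def by simp_all
  ultimately show ?thesis by blast
qed

lemma core:
  fixes Y T :: "real \<times> real \<Rightarrow> real" and y0 t0 R D l M :: real
  assumes M1: "M \<ge> 1" and l0: "l > 0" and RR: "R = 4 * M^3 * l" and D0: "0 \<le> D" and Dl: "D < l/8"
    and BB: "B = cbox (y0-R, t0-R\<^sup>2) (y0+R, t0+R\<^sup>2)"
    and contY: "continuous_on B Y" and contT: "continuous_on B T"
    and H2: "\<And>y y' t. (y,t) \<in> B \<Longrightarrow> (y',t) \<in> B \<Longrightarrow> \<bar>T (y,t) - T (y',t)\<bar> \<le> 4 * D\<^sup>2"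
    and H3: "\<And>w v. w \<in> B \<Longrightarrow> v \<in> B \<Longrightarrow> dpar w v / M - 2 * D \<le> max \<bar>Y w - Y v\<bar> (sqrt \<bar>T w - T v\<bar>)"
    and H4: "\<And>w v. w \<in> B \<Longrightarrow> v \<in> B \<Longrightarrow> \<bar>Y w - Y v\<bar> \<le> M * dpar w v + 2 * D"
  shows "\<exists>a b c d. b - a \<ge> 5/2 * l \<and> d - c \<ge> 2 * l\<^sup>2 \<and> cbox (a,c) (b,d) \<subseteq> (\<lambda>w. (Y w, T w)) ` B"
proof (cases "Y (y0-R, t0) \<le> Y (y0+R, t0)")
  case True
  show ?thesis by (rule core_pos[OF assms True])
next
  case False
  have ab: "\<bar>(- Y w) - (- Y v)\<bar> = \<bar>Y w - Y v\<bar>" for w v by (simp add: abs_minus_commute)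
  have "\<exists>a b c d. b - a \<ge> 5/2 * l \<and> d - c \<ge> 2 * l\<^sup>2 \<and> cbox (a,c) (b,d) \<subseteq> (\<lambda>w. (- Y w, T w)) ` B"
  proof (rule core_pos[OF M1 l0 RR D0 Dl BB _ contT H2])
    show "continuous_on B (\<lambda>w. - Y w)" using contY by (intro continuous_intros)
    show "dpar w v / M - 2 * D \<le> max \<bar>(- Y w) - (- Y v)\<bar> (sqrt \<bar>T w - T v\<bar>)" if "w \<in> B" "v \<in> B" for w v
      unfolding ab using H3[OF that] .
    show "\<bar>(- Y w) - (- Y v)\<bar> \<le> M * dpar w v + 2 * D" if "w \<in> B" "v \<in> B" for w v
      unfolding ab using H4[OF that] .
    show "- Y (y0-R, t0) \<le> - Y (y0+R, t0)" using False by simp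
  qed
  then obtain a b c d where abcd: "b - a \<ge> 5/2 * l" "d - c \<ge> 2 * l\<^sup>2" "cbox (a,c) (b,d) \<subseteq> (\<lambda>w. (- Y w, T w)) ` B"
    by blast
  have "cbox (-b,c) (-a,d) \<subseteq> (\<lambda>w. (Y w, T w)) ` B"
  proof
    fix z assume z: "z \<in> cbox (-b,c) (-a,d)"
    obtain A Bt where zz: "z = (A, Bt)" by (cases z) auto
    have "(-A, Bt) \<in> cbox (a,c) (b,d)" using z unfolding zz cbox_Pair_iff mem_box_real by auto
    then obtain w where "w \<in> B" "(-A, Bt) = (- Y w, T w)" using abcd(3) by blast
    then show "z \<in> (\<lambda>w. (Y w, T w)) ` B" unfolding zz by force
  qed
  moreover have "- a - (- b) \<ge> 5/2 * l" using abcd by simp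
  ultimately show ?thesis using abcd(2) by blast
qed

lemma proj_simp: "proj (x,y,t) = (0, y, t + x*y/2)" by (simp add: proj_def)

lemma hdist_x0: "hdist (0,y,t) (0,\<eta>,s) = max \<bar>y-\<eta>\<bar> (sqrt \<bar>t-s\<bar>)"
  by (simp add: hdist_simp)

lemma hdist_proj: "hdist p (proj p) = \<bar>fst p\<bar>"
proof -
  obtain x y t where p: "p = (x,y,t)" by (cases p) auto
  have "t - (t + x * y / 2) + (x * y - 0 * y) / 2 = 0" by simp
  then show ?thesis unfolding p proj_simp hdist_simp by simp
qed

lemma amgm_abs: "2 * \<bar>a * b\<bar> \<le> a\<^sup>2 + (b::real)\<^sup>2"
proof -
  have e: "(\<bar>a\<bar> - \<bar>b\<bar>)\<^sup>2 = a\<^sup>2 + b\<^sup>2 - 2 * \<bar>a * b\<bar>"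
    by (simp add: power2_eq_square abs_mult algebra_simps)
  have "0 \<le> (\<bar>a\<bar> - \<bar>b\<bar>)\<^sup>2" by simp
  then show ?thesis unfolding e by simp
qed

lemma near_line:
  assumes "hdist (x,y,t) (0,s,c) < D"
  shows "\<bar>x\<bar> \<le> D \<and> \<bar>t + x*y/2 - c\<bar> \<le> 2 * D\<^sup>2"
proof -
  have h1: "sqrt ((x-0)\<^sup>2 + (y-s)\<^sup>2) < D" and h2: "sqrt \<bar>t - c + (x * s - 0 * y)/2\<bar> < D"
    using assms unfolding hdist_simp by simp_all
  have q1: "x\<^sup>2 + (y-s)\<^sup>2 \<le> D\<^sup>2" using h1 by (intro sqrt_le_D) simp
  have q2: "\<bar>t - c + x * s/2\<bar> \<le> D\<^sup>2" using h2 by (intro sqrt_le_D) simp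
  have ax: "\<bar>x\<bar> \<le> D" using h1 real_sqrt_ge_abs1[of x "y-s"] by (simp del: real_sqrt_ge_abs1)
  have "2 * \<bar>x * (y-s)\<bar> \<le> x\<^sup>2 + (y-s)\<^sup>2" by (rule amgm_abs)
  then have q3: "\<bar>x * (y-s)\<bar> \<le> D\<^sup>2" using q1 by (smt (verit) zero_le_power2)
  have e: "t + x*y/2 - c = (t - c + x * s/2) + x*(y-s)/2" by (simp add: field_simps)
  have "\<bar>t + x*y/2 - c\<bar> \<le> \<bar>t - c + x * s/2\<bar> + \<bar>x*(y-s)/2\<bar>" unfolding e by (rule abs_triangle_ineq)
  then have "\<bar>t + x*y/2 - c\<bar> \<le> \<bar>t - c + x * s/2\<bar> + \<bar>x*(y-s)\<bar>/2" by simp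
  then show ?thesis using ax q2 q3 by simp
qed

lemma dpar_eq: "dpar v w = max \<bar>fst v - fst w\<bar> (sqrt \<bar>snd v - snd w\<bar>)"
  by (cases v; cases w) (simp add: dpar_def)

lemma dpar_sym: "dpar v w = dpar w v"
  unfolding dpar_eq by (simp add: abs_minus_commute)

lemma bilip_cont:
  fixes f :: "real \<times> real \<Rightarrow> heis"
  assumes lip: "\<And>w v. hdist (f v) (f w) \<le> M * dpar v w"
  shows "continuous_on UNIV f"
proof -
  have "isCont f w" for w
  proof -
    define X where "X v = fst (f v)" for v
    define Yc where "Yc v = fst (snd (f v))" for v
    define Tc where "Tc v = snd (snd (f v))" for v
    have fe: "f v = (X v, Yc v, Tc v)" for v unfolding X_def Yc_def Tc_def by simp
    have d0: "((\<lambda>v. dpar v w) \<longlongrightarrow> 0) (at w)"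
    proof -
      have "((\<lambda>v. max \<bar>fst v - fst w\<bar> (sqrt \<bar>snd v - snd w\<bar>)) \<longlongrightarrow> max \<bar>fst w - fst w\<bar> (sqrt \<bar>snd w - snd w\<bar>)) (at w)"
        by (intro tendsto_intros)
      then show ?thesis unfolding dpar_eq by simp
    qed
    have Md0: "((\<lambda>v. M * dpar v w) \<longlongrightarrow> 0) (at w)" using tendsto_mult[OF tendsto_const d0, of M] by simp
    define h where "h v = hdist (f v) (f w)" for v
    have h0: "(h \<longlongrightarrow> 0) (at w)"
      by (rule Lim_null_comparison[OF _ Md0]) (simp add: h_def hdist_nonneg lip)
    have hh: "max (sqrt ((X v - X w)\<^sup>2 + (Yc v - Yc w)\<^sup>2)) (sqrt \<bar>Tc v - Tc w + (X v * Yc w - X w * Yc v)/2\<bar>) = h v" for v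
      unfolding h_def fe hdist_simp ..
    have bx: "\<bar>X v - X w\<bar> \<le> h v" for v
      using hh[of v] real_sqrt_ge_abs1[of "X v - X w" "Yc v - Yc w"] by linarith
    have by': "\<bar>Yc v - Yc w\<bar> \<le> h v" for v
      using hh[of v] real_sqrt_ge_abs2[of "Yc v - Yc w" "X v - X w"] by linarith
    have bt: "\<bar>Tc v - Tc w + (X v * Yc w - X w * Yc v)/2\<bar> \<le> (h v)\<^sup>2" for v
    proof -
      have "sqrt \<bar>Tc v - Tc w + (X v * Yc w - X w * Yc v)/2\<bar> \<le> h v" using hh[of v] by linarith
      then show ?thesis by (rule sqrt_le_D)
    qed
    have h20: "((\<lambda>v. (h v)\<^sup>2) \<longlongrightarrow> 0) (at w)" using tendsto_power[OF h0, of 2] by simp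
    have tx: "((\<lambda>v. X v - X w) \<longlongrightarrow> 0) (at w)"
      by (rule Lim_null_comparison[OF _ h0]) (simp add: bx)
    have ty: "((\<lambda>v. Yc v - Yc w) \<longlongrightarrow> 0) (at w)"
      by (rule Lim_null_comparison[OF _ h0]) (simp add: by')
    have tX: "(X \<longlongrightarrow> X w) (at w)" using tx Lim_null by blast
    have tY: "(Yc \<longlongrightarrow> Yc w) (at w)" using ty Lim_null by blast
    have te: "((\<lambda>v. Tc v - Tc w + (X v * Yc w - X w * Yc v)/2) \<longlongrightarrow> 0) (at w)"
      by (rule Lim_null_comparison[OF _ h20]) (simp add: bt)
    have tc: "((\<lambda>v. (X v * Yc w - X w * Yc v)/2) \<longlongrightarrow> (X w * Yc w - X w * Yc w)/2) (at w)"
      by (intro tendsto_intros tX tY) auto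
    have "((\<lambda>v. (Tc v - Tc w + (X v * Yc w - X w * Yc v)/2) - (X v * Yc w - X w * Yc v)/2) \<longlongrightarrow> 0 - (X w * Yc w - X w * Yc w)/2) (at w)"
      by (rule tendsto_diff[OF te tc])
    then have "((\<lambda>v. Tc v - Tc w) \<longlongrightarrow> 0) (at w)" by simp
    then have tT: "(Tc \<longlongrightarrow> Tc w) (at w)" using Lim_null by blast
    have "((\<lambda>v. (X v, Yc v, Tc v)) \<longlongrightarrow> (X w, Yc w, Tc w)) (at w)"
      by (intro tendsto_Pair tX tY tT)
    then show ?thesis unfolding isCont_def fe[symmetric] by simp
  qed
  then show ?thesis by (simp add: continuous_at_imp_continuous_on)
qed

lemma rot_cont: "continuous_on UNIV (rot a)"
proof -
  have "rot a = (\<lambda>p. (fst p * cos a - fst (snd p) * sin a, fst p * sin a + fst (snd p) * cos a, snd (snd p)))"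
    by (auto simp: rot_def)
  show ?thesis unfolding \<open>rot a = _\<close> by (intro continuous_intros)
qed

lemma proj_cont: "continuous_on UNIV proj"
proof -
  have "proj = (\<lambda>p. (0, fst (snd p), snd (snd p) + fst p * fst (snd p) / 2))"
    by (auto simp: proj_def)
  show ?thesis unfolding \<open>proj = _\<close> by (intro continuous_intros) auto
qed

lemma pball_box:
  assumes "R \<ge> 0"
  shows "pball (y0,t0) R = cbox (y0-R, t0-R\<^sup>2) (y0+R, t0+R\<^sup>2)"
proof (intro set_eqI)
  fix v :: "real \<times> real"
  obtain y t where v: "v = (y,t)" by (cases v) auto
  have "sqrt \<bar>t0 - t\<bar> \<le> R \<longleftrightarrow> \<bar>t0 - t\<bar> \<le> R\<^sup>2"
    using assms by (auto intro: real_le_lsqrt dest: sqrt_le_D)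
  then show "v \<in> pball (y0,t0) R \<longleftrightarrow> v \<in> cbox (y0-R, t0-R\<^sup>2) (y0+R, t0+R\<^sup>2)"
    unfolding v pball_def mem_Collect_eq dpar_simp cbox_Pair_iff mem_box_real by (auto simp: abs_le_iff)
qed

theorem proposition5p3:
  fixes M :: real
  assumes "M \<ge> 1"
  shows "\<exists>H :: real. H \<ge> 1 \<and> (\<exists>\<epsilon> :: real. \<epsilon> > 0 \<and>
    (\<forall>(f :: real \<times> real \<Rightarrow> heis) (\<theta> :: real) (n :: int) (k :: int) (l :: int).
       bilipschitz M f \<longrightarrow> -(pi/2) \<le> \<theta> \<longrightarrow> \<theta> < pi/2 \<longrightarrow>
       (\<exists>V. vertical_subgroup V \<and> plane_angle V \<theta> = 0 \<and>
            beta f V (centre n k l) (H * side n) < \<epsilon> / H) \<longrightarrow>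
       hausdorff_measure hdist 3 (proj_theta \<theta> ` f ` enlarged H n k l) \<ge> ennreal (side n ^ 3)))"
proof -
  have M1: "M \<ge> 1" by (rule assms)
  have M0: "M > 0" using M1 by simp
  define H where "H = 4 * M^3"
  have M31: "M^3 \<ge> 1" using M1 by (simp add: one_le_power)
  have H1: "H \<ge> 1" unfolding H_def using M31 by simp
  have H0: "H > 0" using H1 by simp
  have main: "hausdorff_measure hdist 3 (proj_theta \<theta> ` f ` enlarged H n k l) \<ge> ennreal (side n ^ 3)"
    if bl: "bilipschitz M f" and VV: "vertical_subgroup V" "plane_angle V \<theta> = 0"
      and bt: "beta f V (centre n k l) (H * side n) < (1/8) / H"
    for f :: "real \<times> real \<Rightarrow> heis" and \<theta> :: real and n k l :: int and V
  proof -
    define sl where "sl = side n"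
    have sl0: "sl > 0" unfolding sl_def side_def by simp
    define R where "R = H * sl"
    have R0: "R > 0" unfolding R_def using H0 sl0 by simp
    have RR: "R = 4 * M^3 * sl" unfolding R_def H_def by simp
    obtain y0 t0 where c0: "centre n k l = (y0, t0)" by (cases "centre n k l") auto
    define B where "B = enlarged H n k l"
    have BB: "B = cbox (y0-R, t0-R\<^sup>2) (y0+R, t0+R\<^sup>2)"
      unfolding B_def enlarged_def c0 R_def[symmetric] sl_def[symmetric] using pball_box R0 by simp
    have Bp: "B = pball (y0,t0) R" unfolding B_def enlarged_def c0 R_def sl_def ..
    have lipf: "hdist (f w) (f v) \<le> M * dpar w v" for w v using bl unfolding bilipschitz_def by blast
    have colip: "dpar w v / M \<le> hdist (f w) (f v)" for w v using bl unfolding bilipschitz_def by blast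
    define Sset where "Sset = {\<epsilon>. \<epsilon> > 0 \<and> (\<forall>hl. horizontal_line_W hl \<longrightarrow>
        (\<exists>L. horizontal_line L \<and> L \<subseteq> V \<and> f ` (hl \<inter> pball (y0,t0) R) \<subseteq> hnbhd L (\<epsilon> * R)))}"
    have betaS: "beta f V (centre n k l) (H * side n) = Inf Sset"
      unfolding beta_def Sset_def c0 R_def sl_def ..
    have Sne: "Sset \<noteq> {}"
    proof -
      obtain L0 where L0: "horizontal_line L0" "L0 \<subseteq> V" "(0,0,0) \<in> L0" using V_has_line[OF VV(1)] by blast
      define e0 where "e0 = (M * R + hdist (f (y0,t0)) (0,0,0) + 1) / R"
      have e0p: "e0 > 0" unfolding e0_def using R0 M0 hdist_nonneg[of "f (y0,t0)" "(0,0,0)"]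
        by (intro divide_pos_pos) (simp_all add: add_nonneg_pos)
      have "f ` (hl \<inter> pball (y0,t0) R) \<subseteq> hnbhd L0 (e0 * R)" for hl
      proof
        fix p assume "p \<in> f ` (hl \<inter> pball (y0,t0) R)"
        then obtain w where w: "w \<in> pball (y0,t0) R" "p = f w" by blast
        have "hsetdist p L0 \<le> hdist p (0,0,0)" unfolding hsetdist_def
        proof (rule cInf_lower)
          show "hdist p (0,0,0) \<in> {hdist p q |q. q \<in> L0}" using L0(3) by blast
          show "bdd_below {hdist p q |q. q \<in> L0}" by (rule bdd_belowI[of _ 0]) (auto simp: hdist_nonneg)
        qed
        also have "\<dots> \<le> hdist p (f (y0,t0)) + hdist (f (y0,t0)) (0,0,0)" by (rule hdist_triangle)
        also have "hdist p (f (y0,t0)) \<le> M * R"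
        proof -
          have "dpar (y0,t0) w \<le> R" using w(1) unfolding pball_def by simp
          then have "dpar w (y0,t0) \<le> R" using dpar_sym by metis
          then have "M * dpar w (y0,t0) \<le> M * R" using M0 by simp
          then show ?thesis using lipf[of w "(y0,t0)"] w(2) by simp
        qed
        finally have "hsetdist p L0 \<le> e0 * R" unfolding e0_def using R0 by simp
        then show "p \<in> hnbhd L0 (e0 * R)" unfolding hnbhd_def by simp
      qed
      then have "e0 \<in> Sset" unfolding Sset_def using e0p L0(1,2) by blast
      then show ?thesis by blast
    qed
    obtain e' where e': "e' \<in> Sset" "e' < (1/8) / H" using cInf_lessD[OF Sne] bt betaS by metis
    have e'0: "e' > 0" using e'(1) unfolding Sset_def by simp
    have eR: "e' * R < sl / 8"
    proof -
      have "e' * H < 1/8" using e'(2) H0 by (simp add: field_simps)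
      then have "e' * H * sl < 1/8 * sl" using sl0 by (simp add: mult_strict_right_mono)
      then show ?thesis unfolding R_def by (simp add: mult.assoc)
    qed
    define D where "D = (e' * R + sl / 8) / 2"
    have D0: "0 \<le> D" unfolding D_def using e'0 R0 sl0 by simp
    have aux: "\<And>x. x < sl/8 \<Longrightarrow> (x + sl/8)/2 < sl/8 \<and> x < (x + sl/8)/2" by simp
    have Dl: "D < sl / 8" unfolding D_def using aux[OF eR] by blast
    have eD: "e' * R < D" unfolding D_def using aux[OF eR] by blast
    define Lf where "Lf t = (SOME L. horizontal_line L \<and> L \<subseteq> V \<and> f ` ((UNIV \<times> {t}) \<inter> pball (y0,t0) R) \<subseteq> hnbhd L (e' * R))" for t
    have Lf: "horizontal_line (Lf t) \<and> Lf t \<subseteq> V \<and> f ` ((UNIV \<times> {t}) \<inter> pball (y0,t0) R) \<subseteq> hnbhd (Lf t) (e' * R)" for t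
    proof -
      have "horizontal_line_W (UNIV \<times> {t})" unfolding horizontal_line_W_def by blast
      then have "\<exists>L. horizontal_line L \<and> L \<subseteq> V \<and> f ` ((UNIV \<times> {t}) \<inter> pball (y0,t0) R) \<subseteq> hnbhd L (e' * R)"
        using e'(1) unfolding Sset_def by blast
      then show ?thesis unfolding Lf_def by (rule someI_ex)
    qed
    define cf where "cf t = (SOME c. \<forall>q\<in>Lf t. fst (rot (-\<theta>) q) = 0 \<and> snd (snd q) = c)" for t
    have cf: "\<forall>q\<in>Lf t. fst (rot (-\<theta>) q) = 0 \<and> snd (snd q) = cf t" for t
    proof -
      have "\<exists>c. \<forall>q\<in>Lf t. fst (rot (-\<theta>) q) = 0 \<and> snd (snd q) = c"
        using V_lines[OF VV] Lf[of t] by blast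
      then show ?thesis unfolding cf_def by (rule someI_ex)
    qed
    have Lne: "Lf t \<noteq> {}" for t
    proof -
      obtain p a b where "Lf t = {hmult p (s * a, s * b, 0) | s. True}"
        using Lf[of t] unfolding horizontal_line_def by blast
      then show ?thesis by blast
    qed
    define g where "g w = rot (-\<theta>) (f w)" for w
    define Yf where "Yf w = fst (snd (proj (g w)))" for w
    define Tf where "Tf w = snd (snd (proj (g w)))" for w
    have projg: "proj (g w) = (0, Yf w, Tf w)" for w
      unfolding Yf_def Tf_def by (cases "g w") (simp add: proj_simp)
    have key: "\<bar>fst (g w)\<bar> \<le> D \<and> \<bar>Tf w - cf (snd w)\<bar> \<le> 2 * D\<^sup>2" if "w \<in> B" for w
    proof -
      obtain y t where wy: "w = (y,t)" by (cases w) auto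
      have "w \<in> (UNIV \<times> {t}) \<inter> pball (y0,t0) R" using that unfolding Bp wy by simp
      then have "f w \<in> f ` ((UNIV \<times> {t}) \<inter> pball (y0,t0) R)" by (rule imageI)
      then have "f w \<in> hnbhd (Lf t) (e' * R)" using Lf[of t] by (meson subsetD)
      then have "hsetdist (f w) (Lf t) \<le> e' * R" unfolding hnbhd_def by simp
      then have lt: "Inf {hdist (f w) q |q. q \<in> Lf t} < D" unfolding hsetdist_def using eD by simp
      have ne: "{hdist (f w) q |q. q \<in> Lf t} \<noteq> {}" using Lne[of t] by blast
      obtain x where x: "x \<in> {hdist (f w) q |q. q \<in> Lf t}" "x < D" using cInf_lessD[OF ne lt] by blast
      then obtain q where q: "q \<in> Lf t" "hdist (f w) q < D" by blast
      define q' where "q' = rot (-\<theta>) q"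
      have q'1: "fst q' = 0" "snd (snd q') = cf t" using cf[of t] q(1) rot_t unfolding q'_def by auto
      have "q' = (fst q', fst (snd q'), snd (snd q'))" by simp
      then have q'e: "q' = (0, fst (snd q'), cf t)" unfolding q'1 .
      have "hdist (g w) q' < D" unfolding g_def q'_def hdist_rot using q(2) .
      then have "hdist (fst (g w), fst (snd (g w)), snd (snd (g w))) (0, fst (snd q'), cf t) < D"
        using q'e by simp
      from near_line[OF this]
      have "\<bar>fst (g w)\<bar> \<le> D \<and> \<bar>snd (snd (g w)) + fst (g w) * fst (snd (g w)) / 2 - cf t\<bar> \<le> 2 * D\<^sup>2" .
      moreover have "Tf w = snd (snd (g w)) + fst (g w) * fst (snd (g w)) / 2"
        unfolding Tf_def by (cases "g w") (simp add: proj_simp)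
      ultimately show ?thesis using wy by simp
    qed
    have H2: "\<bar>Tf (y,t) - Tf (y',t)\<bar> \<le> 4 * D\<^sup>2" if "(y,t) \<in> B" "(y',t) \<in> B" for y y' t
      using key[OF that(1)] key[OF that(2)] unfolding abs_le_iff by simp
    have gdist: "hdist (g w) (g v) = hdist (f w) (f v)" for w v unfolding g_def by (rule hdist_rot)
    have pdist: "hdist (proj (g w)) (proj (g v)) = max \<bar>Yf w - Yf v\<bar> (sqrt \<bar>Tf w - Tf v\<bar>)" for w v
      unfolding projg hdist_x0 ..
    have gp: "hdist (g w) (proj (g w)) \<le> D" "hdist (proj (g w)) (g w) \<le> D" if "w \<in> B" for w
      using key[OF that] hdist_proj[of "g w"] hdist_sym[of "g w" "proj (g w)"] by simp_all
    have H3: "dpar w v / M - 2 * D \<le> max \<bar>Yf w - Yf v\<bar> (sqrt \<bar>Tf w - Tf v\<bar>)" if "w \<in> B" "v \<in> B" for w v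
    proof -
      have "hdist (g w) (g v) \<le> hdist (g w) (proj (g w)) + hdist (proj (g w)) (g v)" by (rule hdist_triangle)
      also have "hdist (proj (g w)) (g v) \<le> hdist (proj (g w)) (proj (g v)) + hdist (proj (g v)) (g v)" by (rule hdist_triangle)
      finally have "hdist (g w) (g v) \<le> D + hdist (proj (g w)) (proj (g v)) + D"
        using gp[OF that(1)] gp[OF that(2)] by linarith
      then show ?thesis using colip[of w v] gdist[of w v] pdist[of w v] by linarith
    qed
    have H4: "\<bar>Yf w - Yf v\<bar> \<le> M * dpar w v + 2 * D" if "w \<in> B" "v \<in> B" for w v
    proof -
      have "hdist (proj (g w)) (proj (g v)) \<le> hdist (proj (g w)) (g w) + hdist (g w) (proj (g v))" by (rule hdist_triangle)
      also have "hdist (g w) (proj (g v)) \<le> hdist (g w) (g v) + hdist (g v) (proj (g v))" by (rule hdist_triangle)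
      finally have "hdist (proj (g w)) (proj (g v)) \<le> D + hdist (g w) (g v) + D"
        using gp[OF that(1)] gp[OF that(2)] by linarith
      moreover have "\<bar>Yf w - Yf v\<bar> \<le> hdist (proj (g w)) (proj (g v))" unfolding pdist by simp
      ultimately show ?thesis using lipf[of w v] gdist[of w v] by linarith
    qed
    have contf: "continuous_on UNIV f"
      by (rule bilip_cont[of f M]) (rule lipf)
    have contg: "continuous_on UNIV (\<lambda>w. proj (g w))" unfolding g_def
      using continuous_on_compose2[OF proj_cont continuous_on_compose2[OF rot_cont contf]] by auto
    have contY: "continuous_on B Yf" unfolding Yf_def
      using contg by (intro continuous_intros) (auto intro: continuous_on_subset)
    have contT: "continuous_on B Tf" unfolding Tf_def
      using contg by (intro continuous_intros) (auto intro: continuous_on_subset)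
    obtain a b c d where abcd: "b - a \<ge> 5/2 * sl" "d - c \<ge> 2 * sl\<^sup>2" "cbox (a,c) (b,d) \<subseteq> (\<lambda>w. (Yf w, Tf w)) ` B"
      using core[OF M1 sl0 RR D0 Dl BB contY contT H2 H3 H4] by blast
    define S where "S = proj_theta \<theta> ` f ` B"
    define \<pi> where "\<pi> p = (fst (snd (rot (-\<theta>) p)), snd (snd (rot (-\<theta>) p)))" for p
    have Sform: "p \<in> S \<Longrightarrow> \<exists>w\<in>B. rot (-\<theta>) p = (0, Yf w, Tf w)" for p
    proof -
      assume "p \<in> S"
      then obtain w where w: "w \<in> B" "p = proj_theta \<theta> (f w)" unfolding S_def by blast
      then have "p = rot \<theta> (proj (g w))" unfolding proj_theta_def g_def by simp
      then have "rot (-\<theta>) p = proj (g w)" using rot_rot(1) by simp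
      then show ?thesis using w(1) projg by metis
    qed
    have lip: "\<bar>fst (\<pi> p) - fst (\<pi> q)\<bar> \<le> hdist p q \<and> \<bar>snd (\<pi> p) - snd (\<pi> q)\<bar> \<le> (hdist p q)\<^sup>2"
      if pS: "p \<in> S" and qS: "q \<in> S" for p q
    proof -
      obtain w where w: "rot (-\<theta>) p = (0, Yf w, Tf w)" using Sform[OF pS] by blast
      obtain v where v: "rot (-\<theta>) q = (0, Yf v, Tf v)" using Sform[OF qS] by blast
      have "hdist p q = max \<bar>Yf w - Yf v\<bar> (sqrt \<bar>Tf w - Tf v\<bar>)"
        using hdist_rot[of "-\<theta>" p q] w v hdist_x0 by simp
      moreover have "\<pi> p = (Yf w, Tf w)" "\<pi> q = (Yf v, Tf v)" unfolding \<pi>_def w v by simp_all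
      moreover have "\<bar>Tf w - Tf v\<bar> \<le> (max \<bar>Yf w - Yf v\<bar> (sqrt \<bar>Tf w - Tf v\<bar>))\<^sup>2"
        by (rule sqrt_le_D) simp
      ultimately show ?thesis by simp
    qed
    have sub: "cbox (a,c) (b,d) \<subseteq> \<pi> ` S"
    proof
      fix z assume "z \<in> cbox (a,c) (b,d)"
      then obtain w where w: "w \<in> B" "z = (Yf w, Tf w)" using abcd(3) by blast
      have "proj_theta \<theta> (f w) \<in> S" unfolding S_def using w(1) by blast
      moreover have "\<pi> (proj_theta \<theta> (f w)) = (Yf w, Tf w)"
        unfolding \<pi>_def proj_theta_def g_def[symmetric] o_def rot_rot(1) projg by simp
      ultimately show "z \<in> \<pi> ` S" using w(2) by force
    qed
    have ab: "a \<le> b" "c \<le> d" using abcd sl0 by (simp_all add: add_nonneg_nonneg) (smt (verit) zero_le_power2)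
    have hm: "ennreal ((b-a)*(d-c)/4) \<le> hausdorff_measure hdist 3 S"
      by (rule hm_lower[OF lip sub ab]) auto
    have "(5/2 * sl) * (2 * sl\<^sup>2) \<le> (b-a)*(d-c)"
      using abcd sl0 by (intro mult_mono) auto
    moreover have "(5/2 * sl) * (2 * sl\<^sup>2) = 5 * sl^3" by (simp add: power2_eq_square power3_eq_cube)
    moreover have "sl^3 > 0" using sl0 by simp
    ultimately have "sl ^ 3 \<le> (b-a)*(d-c)/4" by linarith
    then have "ennreal (sl ^ 3) \<le> ennreal ((b-a)*(d-c)/4)" by (rule ennreal_leI)
    then show ?thesis using hm unfolding S_def B_def sl_def by simp
  qed
  show ?thesis
    apply (rule exI[of _ H])
    apply (intro conjI H1)
    apply (rule exI[of _ "1/8"])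
    using main by auto
qed

end
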